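(* Let $P$ be a finite poset in which every element covers at most two elements and is covered by at most two elements. Let $f\colon\mathcal{J}(P)\to\mathbb{R}$ be of the form $f=\sum_{p\in P}(a_pT_p^++a_p'T_p^-+a_p''\mathbb{1}_p)$ with $a_p,a_p',a_p''\in\mathbb{R}$. Fix parameters $\alpha^{\mathrm{PL}},\omega^{\mathrm{PL}}\in\mathbb{R}$ and $\alpha^{\mathrm{B}},\omega^{\mathrm{B}}\in\mathbb{R}_{>0}$, and set \[f^{\mathrm{PL}}\coloneqq\sum_{p\in P}(a_pT_p^{\mathrm{PL}+}+a_p'T_p^{\mathrm{PL}-}+a_p''\mathbb{1}_p^{\mathrm{PL}})\colon\mathbb{R}^P\to\mathbb{R},\qquad f^{\mathrm{B}}\coloneqq\prod_{p\in P}(T_p^{\mathrm{B}+})^{a_p}(T_p^{\mathrm{B}-})^{a_p'}(\mathbb{1}_p^{\mathrm{B}})^{a_p''}\colon\mathbb{R}_{>0}^P\to\mathbb{R}_{>0}.\] If $f=c$ (identically on $\mathcal{J}(P)$) for some $c\in\mathbb{R}$, then $f^{\mathrm{PL}}=c(\omega^{\mathrm{PL}}-\alpha^{\mathrm{PL}})$ identically on $\mathbb{R}^P$ and $f^{\mathrm{B}}=(\omega^{\mathrm{B}}/\alpha^{\mathrm{B}})^c$ identically on $\mathbb{R}_{>0}^P$.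
   Context: $\mathcal{J}(P)$ is the set of order ideals of $P$; for $p\in P$, $I\in\mathcal{J}(P)$: $\mathbb{1}_p(I)=1$ if $p\in I$, else $0$; $T_p^+(I)=1$ if $p$ is a minimal element of $P\setminus I$, else $0$; $T_p^-(I)=1$ if $p$ is a maximal element of $I$, else $0$. Let $\widehat P$ be $P$ with a new minimum $\hat0$ and a new maximum $\hat1$ adjoined; $\lessdot$ denotes the cover relation in $\widehat P$. Any $\pi\in\mathbb{R}^P$ is extended to $\widehat P$ by $\pi(\hat0)=\alpha^{\mathrm{PL}}$, $\pi(\hat1)=\omega^{\mathrm{PL}}$, and define $T_p^{\mathrm{PL}+}(\pi)=\pi(p)-\max\{\pi(r)\colon r\lessdot p\}$, $T_p^{\mathrm{PL}-}(\pi)=\min\{\pi(r)\colon p\lessdot r\}-\pi(p)$, $\mathbb{1}_p^{\mathrm{PL}}(\pi)=\omega^{\mathrm{PL}}-\pi(p)$. Any $\pi\in\mathbb{R}_{>0}^P$ is extended by $\pi(\hat0)=\alpha^{\mathrm{B}}$, $\pi(\hat1)=\omega^{\mathrm{B}}$, and define $T_p^{\mathrm{B}+}(\pi)=\pi(p)/\sum_{r\lessdot p}\pi(r)$, $T_p^{\mathrm{B}-}(\pi)=1/\big(\pi(p)\sum_{p\lessdot r}\pi(r)^{-1}\big)$, $\mathbb{1}_p^{\mathrm{B}}(\pi)=\omega^{\mathrm{B}}/\pi(p)$ (all covers taken in $\widehat P$). *)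

theory Defs
  imports Complex_Main
begin

text \<open>A finite poset is modelled as a finite subset P of a type with a partial order
  (the order of P is the restriction of the ambient order).\<close>

definition covers_in :: "'a::order set \<Rightarrow> 'a \<Rightarrow> 'a \<Rightarrow> bool" where
  "covers_in P q p \<longleftrightarrow> q \<in> P \<and> p \<in> P \<and> q < p \<and> \<not> (\<exists>r\<in>P. q < r \<and> r < p)"

definition order_ideals :: "'a::order set \<Rightarrow> 'a set set" where
  "order_ideals P = {I. I \<subseteq> P \<and> (\<forall>x\<in>I. \<forall>y\<in>P. y \<le> x \<longrightarrow> y \<in> I)}"

definition Tplus :: "'a::order set \<Rightarrow> 'a \<Rightarrow> 'a set \<Rightarrow> real" where
  "Tplus P p I = (if p \<in> P - I \<and> \<not> (\<exists>q\<in>P - I. q < p) then 1 else 0)"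

definition Tminus :: "'a::order set \<Rightarrow> 'a \<Rightarrow> 'a set \<Rightarrow> real" where
  "Tminus P p I = (if p \<in> I \<and> \<not> (\<exists>q\<in>I. p < q) then 1 else 0)"

definition ind :: "'a \<Rightarrow> 'a set \<Rightarrow> real" where
  "ind p I = (if p \<in> I then 1 else 0)"

datatype 'a ext = Bot | Elem 'a | Top

fun ext_le :: "'a::order ext \<Rightarrow> 'a ext \<Rightarrow> bool" where
  "ext_le Bot _ = True"
| "ext_le _ Top = True"
| "ext_le (Elem a) (Elem b) = (a \<le> b)"
| "ext_le _ _ = False"

definition ext_less :: "'a::order ext \<Rightarrow> 'a ext \<Rightarrow> bool" where
  "ext_less x y \<longleftrightarrow> ext_le x y \<and> x \<noteq> y"

definition hat :: "'a set \<Rightarrow> 'a ext set" where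
  "hat P = {Bot, Top} \<union> Elem ` P"

definition hcovers :: "'a::order set \<Rightarrow> 'a ext \<Rightarrow> 'a ext \<Rightarrow> bool" where
  "hcovers P x y \<longleftrightarrow> x \<in> hat P \<and> y \<in> hat P \<and> ext_less x y \<and>
     \<not> (\<exists>z\<in>hat P. ext_less x z \<and> ext_less z y)"

fun ext_val :: "real \<Rightarrow> real \<Rightarrow> ('a \<Rightarrow> real) \<Rightarrow> 'a ext \<Rightarrow> real" where
  "ext_val \<alpha> \<omega> \<pi> Bot = \<alpha>"
| "ext_val \<alpha> \<omega> \<pi> Top = \<omega>"
| "ext_val \<alpha> \<omega> \<pi> (Elem p) = \<pi> p"

definition TPLplus :: "'a::order set \<Rightarrow> real \<Rightarrow> real \<Rightarrow> ('a \<Rightarrow> real) \<Rightarrow> 'a \<Rightarrow> real" where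
  "TPLplus P \<alpha> \<omega> \<pi> p = \<pi> p - Max {ext_val \<alpha> \<omega> \<pi> r | r. hcovers P r (Elem p)}"

definition TPLminus :: "'a::order set \<Rightarrow> real \<Rightarrow> real \<Rightarrow> ('a \<Rightarrow> real) \<Rightarrow> 'a \<Rightarrow> real" where
  "TPLminus P \<alpha> \<omega> \<pi> p = Min {ext_val \<alpha> \<omega> \<pi> r | r. hcovers P (Elem p) r} - \<pi> p"

definition indPL :: "real \<Rightarrow> ('a \<Rightarrow> real) \<Rightarrow> 'a \<Rightarrow> real" where
  "indPL \<omega> \<pi> p = \<omega> - \<pi> p"

definition TBplus :: "'a::order set \<Rightarrow> real \<Rightarrow> real \<Rightarrow> ('a \<Rightarrow> real) \<Rightarrow> 'a \<Rightarrow> real" where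
  "TBplus P \<alpha> \<omega> \<pi> p = \<pi> p / (\<Sum>r\<in>{r. hcovers P r (Elem p)}. ext_val \<alpha> \<omega> \<pi> r)"

definition TBminus :: "'a::order set \<Rightarrow> real \<Rightarrow> real \<Rightarrow> ('a \<Rightarrow> real) \<Rightarrow> 'a \<Rightarrow> real" where
  "TBminus P \<alpha> \<omega> \<pi> p =
     1 / (\<pi> p * (\<Sum>r\<in>{r. hcovers P (Elem p) r}. inverse (ext_val \<alpha> \<omega> \<pi> r)))"

definition indB :: "real \<Rightarrow> ('a \<Rightarrow> real) \<Rightarrow> 'a \<Rightarrow> real" where
  "indB \<omega> \<pi> p = \<omega> / \<pi> p"

end

theory Submission
  imports Defs
begin

lemma ext_le_simps2[simp]:
  "ext_le x Top" "ext_le Bot x" "\<not> ext_le Top (Elem b)" "\<not> ext_le (Elem a) Bot" "\<not> ext_le Top Bot"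
  by (cases x; simp)+

lemma ext_less_simps[simp]:
  "ext_less (Elem a) (Elem b) \<longleftrightarrow> a < b"
  "ext_less Bot (Elem b)" "ext_less (Elem a) Top" "\<not> ext_less x Bot" "\<not> ext_less Top x"
  by (cases x; auto simp: ext_less_def less_le)+

lemma hcov_down:
  assumes "p \<in> P"
  shows "hcovers P r (Elem p) \<longleftrightarrow>
     (\<exists>q. r = Elem q \<and> covers_in P q p) \<or> (r = Bot \<and> \<not>(\<exists>q\<in>P. q < p))"
  using assms
  apply (cases r)
  apply (auto simp: hcovers_def hat_def covers_in_def)
  done

lemma hcov_up:
  assumes "p \<in> P"
  shows "hcovers P (Elem p) r \<longleftrightarrow>
     (\<exists>q. r = Elem q \<and> covers_in P p q) \<or> (r = Top \<and> \<not>(\<exists>q\<in>P. p < q))"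
  using assms
  apply (cases r)
  apply (auto simp: hcovers_def hat_def covers_in_def)
  done

lemma cover_below:
  fixes P :: "'a::order set"
  assumes "finite P" "q \<in> P" "p \<in> P" "q < p"
  shows "\<exists>r. covers_in P r p \<and> q \<le> r"
proof -
  define S where "S = {r\<in>P. q \<le> r \<and> r < p}"
  have fS: "finite S" using assms(1) unfolding S_def by simp
  have nS: "S \<noteq> {}" using assms unfolding S_def by blast
  obtain m where m: "m \<in> S" and mx: "\<forall>b\<in>S. m \<le> b \<longrightarrow> m = b"
    using finite_has_maximal[OF fS nS] by blast
  have mP: "m \<in> P" "q \<le> m" "m < p" using m unfolding S_def by auto
  have "\<not> (\<exists>r\<in>P. m < r \<and> r < p)"
  proof
    assume "\<exists>r\<in>P. m < r \<and> r < p"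
    then obtain r where r: "r \<in> P" "m < r" "r < p" by blast
    then have "r \<in> S" using mP unfolding S_def by auto
    then show False using mx r(2) by auto
  qed
  then have "covers_in P m p" unfolding covers_in_def using mP assms by blast
  then show ?thesis using mP by blast
qed

lemma cover_above:
  fixes P :: "'a::order set"
  assumes "finite P" "q \<in> P" "p \<in> P" "p < q"
  shows "\<exists>r. covers_in P p r \<and> r \<le> q"
proof -
  define S where "S = {r\<in>P. r \<le> q \<and> p < r}"
  have fS: "finite S" using assms(1) unfolding S_def by simp
  have nS: "S \<noteq> {}" using assms unfolding S_def by blast
  obtain m where m: "m \<in> S" and mx: "\<forall>b\<in>S. b \<le> m \<longrightarrow> m = b"
    using finite_has_minimal[OF fS nS] by blast
  have mP: "m \<in> P" "m \<le> q" "p < m" using m unfolding S_def by auto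
  have "\<not> (\<exists>r\<in>P. p < r \<and> r < m)"
  proof
    assume "\<exists>r\<in>P. p < r \<and> r < m"
    then obtain r where r: "r \<in> P" "p < r" "r < m" by blast
    then have "r \<in> S" using mP unfolding S_def by auto
    then show False using mx r(3) by auto
  qed
  then have "covers_in P p m" unfolding covers_in_def using mP assms by blast
  then show ?thesis using mP by blast
qed

definition Dn :: "'a::order set \<Rightarrow> 'a \<Rightarrow> 'a ext set" where
  "Dn P p = {r. hcovers P r (Elem p)}"
definition Up :: "'a::order set \<Rightarrow> 'a \<Rightarrow> 'a ext set" where
  "Up P p = {r. hcovers P (Elem p) r}"

lemma Dn_eq:
  fixes P :: "'a::order set"
  assumes "finite P" "p \<in> P"
  shows "Dn P p = (if \<exists>q\<in>P. q < p then Elem ` {q\<in>P. covers_in P q p} else {Bot})"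
  using assms by (auto simp: Dn_def hcov_down covers_in_def)

lemma Up_eq:
  fixes P :: "'a::order set"
  assumes "finite P" "p \<in> P"
  shows "Up P p = (if \<exists>q\<in>P. p < q then Elem ` {q\<in>P. covers_in P p q} else {Top})"
  using assms by (auto simp: Up_def hcov_up covers_in_def)

lemma Dn_sub: "Dn P p \<subseteq> hat P"
  by (auto simp: Dn_def hcovers_def)
lemma Up_sub: "Up P p \<subseteq> hat P"
  by (auto simp: Up_def hcovers_def)

lemma Dn_card:
  fixes P :: "'a::order set"
  assumes "finite P" "p \<in> P" "card {q\<in>P. covers_in P q p} \<le> 2"
  shows "card (Dn P p) = 1 \<or> card (Dn P p) = 2"
proof (cases "\<exists>q\<in>P. q < p")
  case True
  define C where "C = {q\<in>P. covers_in P q p}"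
  obtain q where "q \<in> P" "q < p" using True by auto
  then obtain r where r: "covers_in P r p" using cover_below assms by blast
  have ne: "C \<noteq> {}" using r unfolding C_def covers_in_def by blast
  have fin: "finite C" using assms unfolding C_def by auto
  have eq: "Dn P p = Elem ` C" using True Dn_eq[OF assms(1,2)] unfolding C_def by simp
  have c1: "card (Dn P p) = card C" unfolding eq by (rule card_image) (auto simp: inj_on_def)
  have "card C \<noteq> 0" using ne fin by simp
  then show ?thesis using c1 assms(3) unfolding C_def by linarith
next
  case False
  then show ?thesis using Dn_eq[OF assms(1,2)] by simp
qed

lemma Up_card:
  fixes P :: "'a::order set"
  assumes "finite P" "p \<in> P" "card {q\<in>P. covers_in P p q} \<le> 2"
  shows "card (Up P p) = 1 \<or> card (Up P p) = 2"
proof (cases "\<exists>q\<in>P. p < q")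
  case True
  define C where "C = {q\<in>P. covers_in P p q}"
  obtain q where "q \<in> P" "p < q" using True by auto
  then obtain r where r: "covers_in P p r" using cover_above assms by blast
  have ne: "C \<noteq> {}" using r unfolding C_def covers_in_def by blast
  have fin: "finite C" using assms unfolding C_def by auto
  have eq: "Up P p = Elem ` C" using True Up_eq[OF assms(1,2)] unfolding C_def by simp
  have c1: "card (Up P p) = card C" unfolding eq by (rule card_image) (auto simp: inj_on_def)
  have "card C \<noteq> 0" using ne fin by simp
  then show ?thesis using c1 assms(3) unfolding C_def by linarith
next
  case False
  then show ?thesis using Up_eq[OF assms(1,2)] by simp
qed

definition nu1 :: "('b \<Rightarrow> real) \<Rightarrow> ('b set \<Rightarrow> real) \<Rightarrow> 'b set \<Rightarrow> real" where
  "nu1 l n S = (if card S = 2 then n S else l (the_elem S))"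
definition nu2 :: "('b \<Rightarrow> real) \<Rightarrow> ('b set \<Rightarrow> real) \<Rightarrow> 'b set \<Rightarrow> real" where
  "nu2 l n S = (if card S = 2 then (\<Sum>r\<in>S. l r) - n S else l (the_elem S))"

definition gterm :: "'a::order set \<Rightarrow> ('a \<Rightarrow> real) \<Rightarrow> ('a \<Rightarrow> real) \<Rightarrow> ('a \<Rightarrow> real)
   \<Rightarrow> ('a ext \<Rightarrow> real) \<Rightarrow> ('a ext set \<Rightarrow> real) \<Rightarrow> 'a \<Rightarrow> real" where
  "gterm P a a' a'' l n p = a p * (l (Elem p) - nu1 l n (Dn P p))
      + a' p * (nu2 l n (Up P p) - l (Elem p)) + a'' p * (l Top - l (Elem p))"

definition GG :: "'a::order set \<Rightarrow> ('a \<Rightarrow> real) \<Rightarrow> ('a \<Rightarrow> real) \<Rightarrow> ('a \<Rightarrow> real)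
   \<Rightarrow> ('a ext \<Rightarrow> real) \<Rightarrow> ('a ext set \<Rightarrow> real) \<Rightarrow> real" where
  "GG P a a' a'' l n = (\<Sum>p\<in>P. gterm P a a' a'' l n p)"

lemma nu1_lin: "nu1 (\<lambda>x. k1 * l1 x + k2 * l2 x) (\<lambda>S. k1 * n1 S + k2 * n2 S) S
   = k1 * nu1 l1 n1 S + k2 * nu1 l2 n2 S"
  by (simp add: nu1_def)

lemma nu2_lin: "nu2 (\<lambda>x. k1 * l1 x + k2 * l2 x) (\<lambda>S. k1 * n1 S + k2 * n2 S) S
   = k1 * nu2 l1 n1 S + k2 * nu2 l2 n2 S"
  by (simp add: nu2_def sum.distrib sum_distrib_left algebra_simps)

lemma gterm_lin: "gterm P a a' a'' (\<lambda>x. k1 * l1 x + k2 * l2 x) (\<lambda>S. k1 * n1 S + k2 * n2 S) p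
   = k1 * gterm P a a' a'' l1 n1 p + k2 * gterm P a a' a'' l2 n2 p"
  unfolding gterm_def nu1_lin nu2_lin by (simp add: algebra_simps)

lemma GG_lin: "GG P a a' a'' (\<lambda>x. k1 * l1 x + k2 * l2 x) (\<lambda>S. k1 * n1 S + k2 * n2 S)
   = k1 * GG P a a' a'' l1 n1 + k2 * GG P a a' a'' l2 n2"
  unfolding GG_def gterm_lin by (simp add: sum.distrib sum_distrib_left)

definition lamS :: "'b set \<Rightarrow> 'b \<Rightarrow> real" where
  "lamS A x = (if x \<in> A then 1 else 0)"
definition nuS :: "'b set \<Rightarrow> 'b set \<Rightarrow> real" where
  "nuS A T = (if T \<inter> A \<noteq> {} then 1 else 0)"
definition hatF :: "'a set \<Rightarrow> 'a ext set" where
  "hatF F = insert Top (Elem ` F)"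

lemma nu1_S: "card S = 1 \<or> card S = 2 \<Longrightarrow> nu1 (lamS A) (nuS A) S = nuS A S"
proof (cases "card S = 2")
  case False
  assume "card S = 1 \<or> card S = 2"
  with False obtain x where "S = {x}" by (auto simp: card_1_singleton_iff)
  then show ?thesis by (simp add: nu1_def lamS_def nuS_def)
qed (simp add: nu1_def)

lemma nu2_S: "card S = 1 \<or> card S = 2 \<Longrightarrow> nu2 (lamS A) (nuS A) S = (if S \<subseteq> A then 1 else 0)"
proof (cases "card S = 2")
  case False
  assume "card S = 1 \<or> card S = 2"
  with False obtain x where "S = {x}" by (auto simp: card_1_singleton_iff)
  then show ?thesis by (simp add: nu2_def lamS_def nuS_def)
next
  case True
  then obtain x y where xy: "S = {x, y}" "x \<noteq> y" by (auto simp: card_2_iff)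
  show ?thesis using True unfolding nu2_def xy(1) using xy(2)
    by (simp add: lamS_def nuS_def)
qed

locale L49 =
  fixes P :: "'a::order set" and a a' a'' :: "'a \<Rightarrow> real" and c :: real
  assumes finP: "finite P"
    and down2: "\<forall>p\<in>P. card {q\<in>P. covers_in P q p} \<le> 2"
    and up2: "\<forall>p\<in>P. card {q\<in>P. covers_in P p q} \<le> 2"
    and const: "\<forall>I\<in>order_ideals P.
       (\<Sum>p\<in>P. a p * Tplus P p I + a' p * Tminus P p I + a'' p * ind p I) = c"
begin

abbreviation "G \<equiv> GG P a a' a''"

lemma cardD: "p \<in> P \<Longrightarrow> card (Dn P p) = 1 \<or> card (Dn P p) = 2"
  using Dn_card finP down2 by blast
lemma cardU: "p \<in> P \<Longrightarrow> card (Up P p) = 1 \<or> card (Up P p) = 2"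
  using Up_card finP up2 by blast

lemma filter_eval:
  assumes FP: "F \<subseteq> P" and up: "\<forall>x\<in>F. \<forall>y\<in>P. x \<le> y \<longrightarrow> y \<in> F"
  shows "G (lamS (hatF F)) (nuS (hatF F)) = c"
proof -
  define I where "I = P - F"
  define A where "A = hatF F"
  have I: "I \<in> order_ideals P" using up unfolding I_def order_ideals_def by auto
  have PI: "P - I = F" using FP unfolding I_def by auto
  have lamE: "lamS A (Elem p) = (if p \<in> F then 1 else 0)" for p
    by (auto simp: lamS_def A_def hatF_def)
  have lamT: "lamS A Top = 1" by (simp add: lamS_def A_def hatF_def)
  have "gterm P a a' a'' (lamS A) (nuS A) p = a p * Tplus P p I + a' p * Tminus P p I + a'' p * ind p I"
    if p: "p \<in> P" for p
  proof -
    have e1: "Dn P p \<inter> A \<noteq> {} \<longleftrightarrow> (\<exists>q\<in>F. q < p)"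
    proof
      assume "Dn P p \<inter> A \<noteq> {}"
      then obtain x where "x \<in> Dn P p" "x \<in> A" by blast
      then show "\<exists>q\<in>F. q < p" using p
        by (auto simp: Dn_def hcov_down A_def hatF_def covers_in_def)
    next
      assume "\<exists>q\<in>F. q < p"
      then obtain q where q: "q \<in> F" "q < p" by blast
      then obtain r where r: "covers_in P r p" "q \<le> r" using cover_below finP FP p by blast
      then have "r \<in> F" using up q by (auto simp: covers_in_def)
      then have "Elem r \<in> Dn P p \<inter> A" using r p by (auto simp: Dn_def hcov_down A_def hatF_def)
      then show "Dn P p \<inter> A \<noteq> {}" by blast
    qed
    have e2: "Up P p \<subseteq> A \<longleftrightarrow> (\<forall>q\<in>P. p < q \<longrightarrow> q \<in> F)"
    proof
      assume h: "Up P p \<subseteq> A"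
      show "\<forall>q\<in>P. p < q \<longrightarrow> q \<in> F"
      proof (intro ballI impI)
        fix q assume q: "q \<in> P" "p < q"
        then obtain r where r: "covers_in P p r" "r \<le> q" using cover_above finP p by blast
        then have "Elem r \<in> Up P p" using p by (auto simp: Up_def hcov_up)
        then have "r \<in> F" using h by (auto simp: A_def hatF_def)
        then show "q \<in> F" using up r q by auto
      qed
    next
      assume h: "\<forall>q\<in>P. p < q \<longrightarrow> q \<in> F"
      show "Up P p \<subseteq> A"
        using h p by (auto simp: Up_def hcov_up A_def hatF_def covers_in_def)
    qed
    have t1: "Tplus P p I = lamS A (Elem p) - nuS A (Dn P p)"
      unfolding Tplus_def PI lamE nuS_def using e1 up p FP by auto
    have t2: "Tminus P p I = (if Up P p \<subseteq> A then 1 else 0) - lamS A (Elem p)"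
      unfolding Tminus_def lamE using e2 up p FP unfolding I_def by auto
    have t3: "ind p I = lamS A Top - lamS A (Elem p)"
      unfolding ind_def lamE lamT using p unfolding I_def by auto
    show ?thesis unfolding gterm_def t1 t2 t3 nu1_S[OF cardD[OF p]] nu2_S[OF cardU[OF p]] by simp
  qed
  then have "G (lamS A) (nuS A) = (\<Sum>p\<in>P. a p * Tplus P p I + a' p * Tminus P p I + a'' p * ind p I)"
    unfolding GG_def by (rule sum.cong[OF refl])
  then show ?thesis using const I unfolding A_def by auto
qed

end

definition dl :: "'b \<Rightarrow> 'b \<Rightarrow> real" where "dl x y = (if y = x then 1 else 0)"

lemma nu1_cong:
  assumes "card S = 1 \<or> card S = 2" "S \<subseteq> H" "\<forall>x\<in>H. l x = l' x" "card S = 2 \<longrightarrow> n S = n' S"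
  shows "nu1 l n S = nu1 l' n' S"
proof (cases "card S = 2")
  case False
  with assms(1) obtain x where "S = {x}" by (auto simp: card_1_singleton_iff)
  then show ?thesis using assms(2,3) False by (simp add: nu1_def)
qed (use assms in \<open>simp add: nu1_def\<close>)

lemma nu2_cong:
  assumes "card S = 1 \<or> card S = 2" "S \<subseteq> H" "\<forall>x\<in>H. l x = l' x" "card S = 2 \<longrightarrow> n S = n' S"
  shows "nu2 l n S = nu2 l' n' S"
proof (cases "card S = 2")
  case False
  with assms(1) obtain x where "S = {x}" by (auto simp: card_1_singleton_iff)
  then show ?thesis using assms(2,3) False by (simp add: nu2_def)
next
  case True
  have "(\<Sum>r\<in>S. l r) = (\<Sum>r\<in>S. l' r)" using assms(2,3) by (intro sum.cong) auto
  then show ?thesis using True assms(4) by (simp add: nu2_def)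
qed

lemma nuS_comb:
  assumes "E1 \<notin> A" "E2 \<notin> A" "E1 \<noteq> E2" "card T = 2"
  shows "nuS (insert E1 (insert E2 A)) T - nuS (insert E1 A) T - nuS (insert E2 A) T + nuS A T
     = (-1) * dl {E1, E2} T + 0 * dl {E1, E2} T"
proof -
  obtain x y where T: "T = {x, y}" "x \<noteq> y" using assms(4) by (auto simp: card_2_iff)
  show ?thesis unfolding T(1) using T(2) assms(1-3)
    by (auto simp: nuS_def dl_def doubleton_eq_iff)
qed

context L49
begin

lemma G_cong:
  assumes "\<forall>x\<in>hat P. l x = l' x"
    and "\<forall>p\<in>P. (card (Dn P p) = 2 \<longrightarrow> n (Dn P p) = n' (Dn P p))
                \<and> (card (Up P p) = 2 \<longrightarrow> n (Up P p) = n' (Up P p))"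
  shows "G l n = G l' n'"
  unfolding GG_def
proof (rule sum.cong[OF refl])
  fix p assume p: "p \<in> P"
  have h1: "l (Elem p) = l' (Elem p)" "l Top = l' Top" using assms(1) p by (auto simp: hat_def)
  have h2: "nu1 l n (Dn P p) = nu1 l' n' (Dn P p)"
    by (rule nu1_cong[OF cardD[OF p] Dn_sub assms(1)]) (use assms(2) p in auto)
  have h3: "nu2 l n (Up P p) = nu2 l' n' (Up P p)"
    by (rule nu2_cong[OF cardU[OF p] Up_sub assms(1)]) (use assms(2) p in auto)
  show "gterm P a a' a'' l n p = gterm P a a' a'' l' n' p"
    unfolding gterm_def h1 h2 h3 ..
qed

lemma G_zero: "G (\<lambda>_. 0) (\<lambda>_. 0) = 0"
  using GG_lin[of P a a' a'' 0 "\<lambda>_. 0" 0 "\<lambda>_. 0" "\<lambda>_. 0" "\<lambda>_. 0"] by simp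

lemma decomp_nu:
  assumes "finite B" "\<forall>T\<in>B. G (\<lambda>_. 0) (dl T) = 0"
  shows "G (\<lambda>_. 0) (\<lambda>T. if T \<in> B then n T else 0) = 0"
  using assms
proof (induction B rule: finite_induct)
  case empty
  then show ?case using G_zero by simp
next
  case (insert T B)
  have e1: "(\<lambda>T'. if T' \<in> insert T B then n T' else 0)
      = (\<lambda>T'. 1 * (if T' \<in> B then n T' else 0) + n T * dl T T')"
    using insert(2) by (auto simp: dl_def)
  have e2: "(\<lambda>_::'a ext. 0::real) = (\<lambda>x. 1 * 0 + n T * 0)" by simp
  show ?case unfolding e1 apply (subst e2) unfolding GG_lin using insert by simp
qed

lemma decomp_l:
  assumes "finite A"
  shows "G (\<lambda>x. if x \<in> A then l x else 0) (\<lambda>_. 0) = (\<Sum>x\<in>A. l x * G (dl x) (\<lambda>_. 0))"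
  using assms
proof (induction A rule: finite_induct)
  case empty
  then show ?case using G_zero by simp
next
  case (insert y A)
  have e1: "(\<lambda>x. if x \<in> insert y A then l x else 0)
      = (\<lambda>x. 1 * (if x \<in> A then l x else 0) + l y * dl y x)"
    using insert(2) by (auto simp: dl_def)
  have e2: "(\<lambda>_::'a ext set. 0::real) = (\<lambda>T. 1 * 0 + l y * 0)" by simp
  show ?case unfolding e1 apply (subst e2) unfolding GG_lin using insert by simp
qed

end

lemma upins:
  fixes P :: "'a::order set"
  assumes "\<forall>x\<in>F. \<forall>y\<in>P. x \<le> y \<longrightarrow> y \<in> F" "\<forall>y\<in>P. r < y \<longrightarrow> y \<in> F"
  shows "\<forall>x\<in>insert r F. \<forall>y\<in>P. x \<le> y \<longrightarrow> y \<in> insert r F"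
proof (intro ballI impI)
  fix x y assume x: "x \<in> insert r F" and y: "y \<in> P" "x \<le> y"
  show "y \<in> insert r F"
  proof (cases "x = r")
    case True
    then have "y = r \<or> r < y" using y by (metis le_less)
    then show ?thesis using assms(2) y by blast
  next
    case False
    then show ?thesis using x y assms(1) by blast
  qed
qed

context L49
begin

lemma pairA:
  assumes r: "r1 \<in> P" "r2 \<in> P" "\<not> r1 \<le> r2" "\<not> r2 \<le> r1"
  shows "G (\<lambda>_. 0) (dl {Elem r1, Elem r2}) = 0"
proof -
  define F00 where "F00 = {z\<in>P. r1 < z \<or> r2 < z}"
  define A where "A = hatF F00"
  define E1 where "E1 = (Elem r1 :: 'a ext)"
  define E2 where "E2 = (Elem r2 :: 'a ext)"
  have nE: "E1 \<notin> A" "E2 \<notin> A" "E1 \<noteq> E2"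
    using r unfolding A_def hatF_def F00_def E1_def E2_def by (auto simp: less_le_not_le)
  have up00: "\<forall>x\<in>F00. \<forall>y\<in>P. x \<le> y \<longrightarrow> y \<in> F00"
    unfolding F00_def using less_le_trans by blast
  have g11: "G (lamS (insert E1 (insert E2 A))) (nuS (insert E1 (insert E2 A))) = c"
  proof -
    have "insert E1 (insert E2 A) = hatF (insert r1 (insert r2 F00))"
      unfolding A_def hatF_def E1_def E2_def by auto
    moreover have "\<forall>x\<in>insert r1 (insert r2 F00). \<forall>y\<in>P. x \<le> y \<longrightarrow> y \<in> insert r1 (insert r2 F00)"
      apply (rule upins)
       apply (rule upins[OF up00])
      unfolding F00_def by auto
    ultimately show ?thesis using filter_eval[of "insert r1 (insert r2 F00)"] r
      unfolding F00_def by auto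
  qed
  have g10: "G (lamS (insert E1 A)) (nuS (insert E1 A)) = c"
  proof -
    have "insert E1 A = hatF (insert r1 F00)"
      unfolding A_def hatF_def E1_def by auto
    moreover have "\<forall>x\<in>insert r1 F00. \<forall>y\<in>P. x \<le> y \<longrightarrow> y \<in> insert r1 F00"
      apply (rule upins[OF up00])
      unfolding F00_def by auto
    ultimately show ?thesis using filter_eval[of "insert r1 F00"] r
      unfolding F00_def by auto
  qed
  have g01: "G (lamS (insert E2 A)) (nuS (insert E2 A)) = c"
  proof -
    have "insert E2 A = hatF (insert r2 F00)"
      unfolding A_def hatF_def E2_def by auto
    moreover have "\<forall>x\<in>insert r2 F00. \<forall>y\<in>P. x \<le> y \<longrightarrow> y \<in> insert r2 F00"
      apply (rule upins[OF up00])
      unfolding F00_def by auto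
    ultimately show ?thesis using filter_eval[of "insert r2 F00"] r
      unfolding F00_def by auto
  qed
  have g00: "G (lamS A) (nuS A) = c"
    unfolding A_def by (rule filter_eval) (use up00 in \<open>auto simp: F00_def\<close>)
  define l11 where "l11 = lamS (insert E1 (insert E2 A))"
  define l10 where "l10 = lamS (insert E1 A)"
  define l01 where "l01 = lamS (insert E2 A)"
  define l00 where "l00 = lamS A"
  define n11 where "n11 = nuS (insert E1 (insert E2 A))"
  define n10 where "n10 = nuS (insert E1 A)"
  define n01 where "n01 = nuS (insert E2 A)"
  define n00 where "n00 = nuS A"
  have "G (\<lambda>x. 1 * (1 * l11 x + (-1) * l10 x) + 1 * ((-1) * l01 x + 1 * l00 x))
          (\<lambda>T. 1 * (1 * n11 T + (-1) * n10 T) + 1 * ((-1) * n01 T + 1 * n00 T)) = 0"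
    unfolding GG_lin l11_def l10_def l01_def l00_def n11_def n10_def n01_def n00_def
    using g11 g10 g01 g00 by simp
  moreover have "G (\<lambda>x. 1 * (1 * l11 x + (-1) * l10 x) + 1 * ((-1) * l01 x + 1 * l00 x))
          (\<lambda>T. 1 * (1 * n11 T + (-1) * n10 T) + 1 * ((-1) * n01 T + 1 * n00 T))
       = G (\<lambda>x. (-1) * 0 + 0 * 0) (\<lambda>T. (-1) * dl {E1, E2} T + 0 * dl {E1, E2} T)"
  proof (rule G_cong)
    show "\<forall>x\<in>hat P. 1 * (1 * l11 x + - 1 * l10 x) + 1 * (- 1 * l01 x + 1 * l00 x) = - 1 * 0 + 0 * 0"
      using nE unfolding l11_def l10_def l01_def l00_def lamS_def by auto
    have hN: "\<forall>T. card T = 2 \<longrightarrow> 1 * (1 * n11 T + (-1) * n10 T) + 1 * ((-1) * n01 T + 1 * n00 T) = (-1) * dl {E1, E2} T + 0 * dl {E1, E2} T"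
    proof (intro allI impI)
      fix T :: "'a ext set" assume "card T = 2"
      from nuS_comb[OF nE this] show "1 * (1 * n11 T + (-1) * n10 T) + 1 * ((-1) * n01 T + 1 * n00 T) = (-1) * dl {E1, E2} T + 0 * dl {E1, E2} T"
        unfolding n11_def n10_def n01_def n00_def by simp
    qed
    then show "\<forall>p\<in>P. (card (Dn P p) = 2 \<longrightarrow> 1 * (1 * n11 (Dn P p) + (-1) * n10 (Dn P p)) + 1 * ((-1) * n01 (Dn P p) + 1 * n00 (Dn P p)) = (-1) * dl {E1, E2} (Dn P p) + 0 * dl {E1, E2} (Dn P p))
       \<and> (card (Up P p) = 2 \<longrightarrow> 1 * (1 * n11 (Up P p) + (-1) * n10 (Up P p)) + 1 * ((-1) * n01 (Up P p) + 1 * n00 (Up P p)) = (-1) * dl {E1, E2} (Up P p) + 0 * dl {E1, E2} (Up P p))"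
      by blast
  qed
  ultimately have "(-1) * G (\<lambda>_. 0) (dl {E1, E2}) + 0 * G (\<lambda>_. 0) (dl {E1, E2}) = 0"
    unfolding GG_lin by simp
  then show ?thesis unfolding E1_def E2_def by simp
qed

end

context L49
begin

lemma Dn_pair:
  assumes p: "p \<in> P" and c2: "card (Dn P p) = 2"
  shows "\<exists>r1 r2. r1 \<in> P \<and> r2 \<in> P \<and> \<not> r1 \<le> r2 \<and> \<not> r2 \<le> r1 \<and> Dn P p = {Elem r1, Elem r2}"
proof -
  have ex: "\<exists>q\<in>P. q < p"
  proof (rule ccontr)
    assume "\<not> (\<exists>q\<in>P. q < p)"
    then have "Dn P p = {Bot}" using Dn_eq[OF finP p] by simp
    then show False using c2 by simp
  qed
  then have eq: "Dn P p = Elem ` {q\<in>P. covers_in P q p}" using Dn_eq[OF finP p] by simp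
  obtain x y where xy: "Dn P p = {x, y}" "x \<noteq> y" using c2 by (auto simp: card_2_iff)
  obtain r1 where r1: "x = Elem r1" "r1 \<in> P" "covers_in P r1 p" using xy eq by blast
  obtain r2 where r2: "y = Elem r2" "r2 \<in> P" "covers_in P r2 p" using xy eq by blast
  have ne: "r1 \<noteq> r2" using xy r1 r2 by auto
  have "\<not> r1 \<le> r2"
  proof
    assume "r1 \<le> r2"
    then have "r1 < r2" using ne by simp
    then show False using r1(3) r2 unfolding covers_in_def by blast
  qed
  moreover have "\<not> r2 \<le> r1"
  proof
    assume "r2 \<le> r1"
    then have "r2 < r1" using ne by simp
    then show False using r2(3) r1 unfolding covers_in_def by blast
  qed
  ultimately show ?thesis using r1 r2 xy by blast
qed

lemma Up_pair:
  assumes p: "p \<in> P" and c2: "card (Up P p) = 2"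
  shows "\<exists>r1 r2. r1 \<in> P \<and> r2 \<in> P \<and> \<not> r1 \<le> r2 \<and> \<not> r2 \<le> r1 \<and> Up P p = {Elem r1, Elem r2}"
proof -
  have ex: "\<exists>q\<in>P. p < q"
  proof (rule ccontr)
    assume "\<not> (\<exists>q\<in>P. p < q)"
    then have "Up P p = {Top}" using Up_eq[OF finP p] by simp
    then show False using c2 by simp
  qed
  then have eq: "Up P p = Elem ` {q\<in>P. covers_in P p q}" using Up_eq[OF finP p] by simp
  obtain x y where xy: "Up P p = {x, y}" "x \<noteq> y" using c2 by (auto simp: card_2_iff)
  obtain r1 where r1: "x = Elem r1" "r1 \<in> P" "covers_in P p r1" using xy eq by blast
  obtain r2 where r2: "y = Elem r2" "r2 \<in> P" "covers_in P p r2" using xy eq by blast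
  have ne: "r1 \<noteq> r2" using xy r1 r2 by auto
  have "\<not> r1 \<le> r2"
  proof
    assume "r1 \<le> r2"
    then have "r1 < r2" using ne by simp
    then show False using r1 r2(3) unfolding covers_in_def by blast
  qed
  moreover have "\<not> r2 \<le> r1"
  proof
    assume "r2 \<le> r1"
    then have "r2 < r1" using ne by simp
    then show False using r2 r1(3) unfolding covers_in_def by blast
  qed
  ultimately show ?thesis using r1 r2 xy by blast
qed

definition "Sig = {T. (\<exists>p\<in>P. T = Dn P p \<or> T = Up P p) \<and> card T = 2}"

lemma Sig_fin: "finite Sig"
proof -
  have "Sig \<subseteq> Dn P ` P \<union> Up P ` P" unfolding Sig_def by auto
  then show ?thesis using finP finite_subset by blast
qed

lemma Sig_zero: "\<forall>T\<in>Sig. G (\<lambda>_. 0) (dl T) = 0"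
proof
  fix T assume "T \<in> Sig"
  then obtain p where p: "p \<in> P" "T = Dn P p \<or> T = Up P p" "card T = 2" unfolding Sig_def by blast
  then obtain r1 r2 where "r1 \<in> P" "r2 \<in> P" "\<not> r1 \<le> r2" "\<not> r2 \<le> r1" "T = {Elem r1, Elem r2}"
    using Dn_pair Up_pair by metis
  then show "G (\<lambda>_. 0) (dl T) = 0" using pairA by blast
qed

lemma G_indep: "G l n = G l n'"
proof -
  have "G (\<lambda>x. 1 * l x + (-1) * l x) (\<lambda>T. 1 * n T + (-1) * n' T) = G l n - G l n'"
    unfolding GG_lin by simp
  moreover have "G (\<lambda>x. 1 * l x + (-1) * l x) (\<lambda>T. 1 * n T + (-1) * n' T)
      = G (\<lambda>_. 0) (\<lambda>T. if T \<in> Sig then 1 * n T + (-1) * n' T else 0)"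
    by (rule G_cong) (auto simp: Sig_def)
  moreover have "G (\<lambda>_. 0) (\<lambda>T. if T \<in> Sig then 1 * n T + (-1) * n' T else 0) = 0"
    by (rule decomp_nu[OF Sig_fin Sig_zero])
  ultimately show ?thesis by simp
qed

end

context L49
begin

lemma elemE:
  assumes q: "q \<in> P"
  shows "G (dl (Elem q)) (\<lambda>_. 0) = 0"
proof -
  define F0 where "F0 = {z\<in>P. q < z}"
  have up0: "\<forall>x\<in>F0. \<forall>y\<in>P. x \<le> y \<longrightarrow> y \<in> F0"
    unfolding F0_def using less_le_trans by blast
  have up1: "\<forall>x\<in>insert q F0. \<forall>y\<in>P. x \<le> y \<longrightarrow> y \<in> insert q F0"
    by (rule upins[OF up0]) (auto simp: F0_def)
  have g0: "G (lamS (hatF F0)) (nuS (hatF F0)) = c"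
    by (rule filter_eval[OF _ up0]) (auto simp: F0_def)
  have g1: "G (lamS (hatF (insert q F0))) (nuS (hatF (insert q F0))) = c"
    by (rule filter_eval[OF _ up1]) (use q in \<open>auto simp: F0_def\<close>)
  have nq: "Elem q \<notin> hatF F0" unfolding hatF_def F0_def by auto
  have e: "(\<lambda>x. 1 * lamS (hatF (insert q F0)) x + (-1) * lamS (hatF F0) x) = dl (Elem q)"
    using nq by (auto simp: lamS_def dl_def hatF_def)
  have "G (dl (Elem q)) (\<lambda>_. 0)
     = G (\<lambda>x. 1 * lamS (hatF (insert q F0)) x + (-1) * lamS (hatF F0) x)
         (\<lambda>T. 1 * nuS (hatF (insert q F0)) T + (-1) * nuS (hatF F0) T)"
    unfolding e by (rule G_indep)
  also have "\<dots> = 0" unfolding GG_lin g0 g1 by simp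
  finally show ?thesis .
qed

lemma topE: "G (dl Top) (\<lambda>_. 0) = c"
proof -
  have e: "lamS (hatF {}) = dl Top" by (auto simp: lamS_def dl_def hatF_def)
  have "G (dl Top) (\<lambda>_. 0) = G (lamS (hatF {})) (nuS (hatF {}))"
    unfolding e by (rule G_indep)
  also have "\<dots> = c" by (rule filter_eval) auto
  finally show ?thesis .
qed

lemma onesE: "G (\<lambda>_. 1) (\<lambda>_. 1) = 0"
  unfolding GG_def
proof (rule sum.neutral, rule ballI)
  fix p assume p: "p \<in> P"
  have h1: "nu1 (\<lambda>_. 1) (\<lambda>_. 1) S = 1" for S :: "'a ext set"
    by (simp add: nu1_def)
  have h2: "nu2 (\<lambda>_. 1) (\<lambda>_. 1) (Up P p) = 1"
    using cardU[OF p] by (auto simp: nu2_def)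
  show "gterm P a a' a'' (\<lambda>_. 1) (\<lambda>_. 1) p = 0"
    unfolding gterm_def h1 h2 by simp
qed

lemma G_expand: "G l n = l Bot * G (dl Bot) (\<lambda>_. 0) + l Top * c"
proof -
  have hP: "hat P = insert Bot (insert Top (Elem ` P))" by (auto simp: hat_def)
  have fin: "finite (hat P)" using finP hP by simp
  have "G l n = G l (\<lambda>_. 0)" by (rule G_indep)
  also have "\<dots> = G (\<lambda>x. if x \<in> hat P then l x else 0) (\<lambda>_. 0)"
    by (rule G_cong) auto
  also have "\<dots> = (\<Sum>x\<in>hat P. l x * G (dl x) (\<lambda>_. 0))"
    by (rule decomp_l[OF fin])
  also have "\<dots> = l Bot * G (dl Bot) (\<lambda>_. 0) + (l Top * G (dl Top) (\<lambda>_. 0)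
      + (\<Sum>x\<in>Elem ` P. l x * G (dl x) (\<lambda>_. 0)))"
    unfolding hP using finP by (simp add: image_iff)
  also have "(\<Sum>x\<in>Elem ` P. l x * G (dl x) (\<lambda>_. 0)) = 0"
    using elemE by (intro sum.neutral) auto
  finally show ?thesis using topE by simp
qed

lemma G_formula: "G l n = c * (l Top - l Bot)"
proof -
  have "0 = 1 * G (dl Bot) (\<lambda>_. 0) + 1 * c"
    using G_expand[of "\<lambda>_. 1" "\<lambda>_. 1"] onesE by simp
  then have "G (dl Bot) (\<lambda>_. 0) = - c" by simp
  then show ?thesis using G_expand[of l n] by (simp add: algebra_simps)
qed

end

context L49
begin

lemma PL_part:
  "(\<Sum>p\<in>P. a p * TPLplus P \<alpha> \<omega> \<pi> p + a' p * TPLminus P \<alpha> \<omega> \<pi> p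
                     + a'' p * indPL \<omega> \<pi> p) = c * (\<omega> - \<alpha>)"
proof -
  define l where "l = ext_val \<alpha> \<omega> \<pi>"
  define n where "n = (\<lambda>S. Max (l ` S))"
  have "a p * TPLplus P \<alpha> \<omega> \<pi> p + a' p * TPLminus P \<alpha> \<omega> \<pi> p + a'' p * indPL \<omega> \<pi> p
        = gterm P a a' a'' l n p" if p: "p \<in> P" for p
  proof -
    have s1: "{ext_val \<alpha> \<omega> \<pi> r | r. hcovers P r (Elem p)} = l ` Dn P p"
      unfolding l_def Dn_def by auto
    have s2: "{ext_val \<alpha> \<omega> \<pi> r | r. hcovers P (Elem p) r} = l ` Up P p"
      unfolding l_def Up_def by auto
    have m1: "Max (l ` Dn P p) = nu1 l n (Dn P p)"
    proof (cases "card (Dn P p) = 2")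
      case False
      with cardD[OF p] obtain x where "Dn P p = {x}" by (auto simp: card_1_singleton_iff)
      then show ?thesis using False by (simp add: nu1_def)
    qed (simp add: nu1_def n_def)
    have m2: "Min (l ` Up P p) = nu2 l n (Up P p)"
    proof (cases "card (Up P p) = 2")
      case False
      with cardU[OF p] obtain x where "Up P p = {x}" by (auto simp: card_1_singleton_iff)
      then show ?thesis using False by (simp add: nu2_def)
    next
      case True
      then obtain x y where xy: "Up P p = {x, y}" "x \<noteq> y" by (auto simp: card_2_iff)
      show ?thesis using True unfolding nu2_def n_def xy(1) using xy(2)
        by (simp add: min_def max_def)
    qed
    have lp: "l (Elem p) = \<pi> p" "l Top = \<omega>" unfolding l_def by simp_all
    show ?thesis
      unfolding TPLplus_def TPLminus_def indPL_def s1 s2 m1 m2 gterm_def lp ..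
  qed
  then have "(\<Sum>p\<in>P. a p * TPLplus P \<alpha> \<omega> \<pi> p + a' p * TPLminus P \<alpha> \<omega> \<pi> p
                     + a'' p * indPL \<omega> \<pi> p) = G l n"
    unfolding GG_def by (rule sum.cong[OF refl])
  also have "\<dots> = c * (\<omega> - \<alpha>)" unfolding G_formula l_def by simp
  finally show ?thesis .
qed

lemma B_part:
  assumes \<alpha>: "\<alpha> > 0" and \<omega>: "\<omega> > 0" and \<pi>: "\<forall>p\<in>P. \<pi> p > 0"
  shows "(\<Prod>p\<in>P. TBplus P \<alpha> \<omega> \<pi> p powr a p * TBminus P \<alpha> \<omega> \<pi> p powr a' p
                     * indB \<omega> \<pi> p powr a'' p) = (\<omega> / \<alpha>) powr c"
proof -
  define v where "v = ext_val \<alpha> \<omega> \<pi>"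
  define l where "l = (\<lambda>x. ln (v x))"
  define n where "n = (\<lambda>S. ln (\<Sum>r\<in>S. v r))"
  have vpos: "v x > 0" if "x \<in> hat P" for x
    using that \<alpha> \<omega> \<pi> unfolding v_def hat_def by auto
  define X where "X p = TBplus P \<alpha> \<omega> \<pi> p powr a p * TBminus P \<alpha> \<omega> \<pi> p powr a' p
                     * indB \<omega> \<pi> p powr a'' p" for p
  have main: "X p > 0 \<and> ln (X p) = gterm P a a' a'' l n p" if p: "p \<in> P" for p
  proof -
    have pp: "\<pi> p > 0" using \<pi> p by auto
    have vD: "\<forall>x\<in>Dn P p. v x > 0" using Dn_sub vpos by blast
    have vU: "\<forall>x\<in>Up P p. v x > 0" using Up_sub vpos by blast
    have sD: "(\<Sum>r\<in>Dn P p. v r) > 0"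
    proof -
      obtain x where "x \<in> Dn P p" using cardD[OF p] by (metis card.empty ex_in_conv zero_neq_numeral zero_neq_one)
      moreover have "finite (Dn P p)" using cardD[OF p] card.infinite by fastforce
      ultimately show ?thesis using vD by (intro sum_pos) auto
    qed
    have sU: "(\<Sum>r\<in>Up P p. inverse (v r)) > 0"
    proof -
      obtain x where "x \<in> Up P p" using cardU[OF p] by (metis card.empty ex_in_conv zero_neq_numeral zero_neq_one)
      moreover have "finite (Up P p)" using cardU[OF p] card.infinite by fastforce
      ultimately show ?thesis using vU by (intro sum_pos) auto
    qed
    have Tp: "TBplus P \<alpha> \<omega> \<pi> p = \<pi> p / (\<Sum>r\<in>Dn P p. v r)"
      unfolding TBplus_def Dn_def v_def ..
    have Tm: "TBminus P \<alpha> \<omega> \<pi> p = 1 / (\<pi> p * (\<Sum>r\<in>Up P p. inverse (v r)))"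
      unfolding TBminus_def Up_def v_def ..
    have Tp_pos: "TBplus P \<alpha> \<omega> \<pi> p > 0" unfolding Tp using pp sD by simp
    have Tm_pos: "TBminus P \<alpha> \<omega> \<pi> p > 0" unfolding Tm using pp sU by simp
    have I_pos: "indB \<omega> \<pi> p > 0" unfolding indB_def using pp \<omega> by simp
    have lTp: "ln (TBplus P \<alpha> \<omega> \<pi> p) = l (Elem p) - nu1 l n (Dn P p)"
    proof -
      have "ln (TBplus P \<alpha> \<omega> \<pi> p) = ln (\<pi> p) - ln (\<Sum>r\<in>Dn P p. v r)"
        unfolding Tp using pp sD by (simp add: ln_div)
      moreover have "nu1 l n (Dn P p) = ln (\<Sum>r\<in>Dn P p. v r)"
      proof (cases "card (Dn P p) = 2")
        case False
        with cardD[OF p] obtain x where "Dn P p = {x}" by (auto simp: card_1_singleton_iff)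
        then show ?thesis using False by (simp add: nu1_def l_def)
      qed (simp add: nu1_def n_def)
      ultimately show ?thesis unfolding l_def v_def by simp
    qed
    have lTm: "ln (TBminus P \<alpha> \<omega> \<pi> p) = nu2 l n (Up P p) - l (Elem p)"
    proof -
      have "ln (TBminus P \<alpha> \<omega> \<pi> p) = - ln (\<pi> p) - ln (\<Sum>r\<in>Up P p. inverse (v r))"
        unfolding Tm using pp sU by (simp add: ln_div ln_mult)
      moreover have "nu2 l n (Up P p) = - ln (\<Sum>r\<in>Up P p. inverse (v r))"
      proof (cases "card (Up P p) = 2")
        case False
        with cardU[OF p] obtain x where "Up P p = {x}" by (auto simp: card_1_singleton_iff)
        then show ?thesis using False by (simp add: nu2_def l_def ln_inverse)
      next
        case True
        then obtain x y where xy: "Up P p = {x, y}" "x \<noteq> y" by (auto simp: card_2_iff)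
        have vx: "v x > 0" "v y > 0" using vU xy by auto
        have "inverse (v x) + inverse (v y) = (v x + v y) / (v x * v y)"
          using vx by (simp add: field_simps)
        then have "ln (inverse (v x) + inverse (v y)) = ln (v x + v y) - (ln (v x) + ln (v y))"
          using vx by (simp add: ln_div ln_mult)
        then show ?thesis using True xy unfolding nu2_def n_def l_def by simp
      qed
      ultimately show ?thesis unfolding l_def v_def by simp
    qed
    have lI: "ln (indB \<omega> \<pi> p) = l Top - l (Elem p)"
      unfolding indB_def l_def v_def using pp \<omega> by (simp add: ln_div)
    have Xpos: "X p > 0" unfolding X_def using Tp_pos Tm_pos I_pos by simp
    have "ln (X p) = a p * ln (TBplus P \<alpha> \<omega> \<pi> p) + a' p * ln (TBminus P \<alpha> \<omega> \<pi> p)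
                      + a'' p * ln (indB \<omega> \<pi> p)"
      unfolding X_def using Tp_pos Tm_pos I_pos by (simp add: ln_mult)
    then show ?thesis using Xpos unfolding lTp lTm lI gterm_def by simp
  qed
  have "ln (\<Prod>p\<in>P. X p) = (\<Sum>p\<in>P. ln (X p))"
    using main finP by (intro ln_prod) force+
  also have "\<dots> = G l n" unfolding GG_def using main by (intro sum.cong) auto
  also have "\<dots> = c * (ln \<omega> - ln \<alpha>)" unfolding G_formula l_def v_def by simp
  finally have L: "ln (\<Prod>p\<in>P. X p) = c * (ln \<omega> - ln \<alpha>)" .
  have pos: "(\<Prod>p\<in>P. X p) > 0" using main by (intro prod_pos) auto
  have "(\<Prod>p\<in>P. X p) = exp (ln (\<Prod>p\<in>P. X p))" using pos by simp
  also have "\<dots> = (\<omega> / \<alpha>) powr c" unfolding L powr_def using \<alpha> \<omega> by (simp add: ln_div)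
  finally show ?thesis unfolding X_def .
qed

end

theorem lemma4p9:
  fixes P :: "'a::order set"
    and a a' a'' :: "'a \<Rightarrow> real"
    and c \<alpha>PL \<omega>PL \<alpha>B \<omega>B :: real
  assumes finP: "finite P"
    and down2: "\<forall>p\<in>P. card {q\<in>P. covers_in P q p} \<le> 2"
    and up2: "\<forall>p\<in>P. card {q\<in>P. covers_in P p q} \<le> 2"
    and \<alpha>B_pos: "\<alpha>B > 0" and \<omega>B_pos: "\<omega>B > 0"
    and const: "\<forall>I\<in>order_ideals P.
       (\<Sum>p\<in>P. a p * Tplus P p I + a' p * Tminus P p I + a'' p * ind p I) = c"
  shows "(\<forall>\<pi> :: 'a \<Rightarrow> real.
            (\<Sum>p\<in>P. a p * TPLplus P \<alpha>PL \<omega>PL \<pi> p + a' p * TPLminus P \<alpha>PL \<omega>PL \<pi> p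
                     + a'' p * indPL \<omega>PL \<pi> p) = c * (\<omega>PL - \<alpha>PL))
       \<and> (\<forall>\<pi> :: 'a \<Rightarrow> real. (\<forall>p\<in>P. \<pi> p > 0) \<longrightarrow>
            (\<Prod>p\<in>P. TBplus P \<alpha>B \<omega>B \<pi> p powr a p * TBminus P \<alpha>B \<omega>B \<pi> p powr a' p
                     * indB \<omega>B \<pi> p powr a'' p) = (\<omega>B / \<alpha>B) powr c)"
proof -
  interpret L49 P a a' a'' c using finP down2 up2 const by unfold_locales
  show ?thesis using PL_part B_part \<alpha>B_pos \<omega>B_pos by blast
qed

end
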